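(* Let $\mathbf{X}^*=(X^*_{1:1},\dots,X^*_{n:n})'$, $\boldsymbol{\mu}$, $\mathbf{E}$ be as in the context and $\mathbf{1}=(1,\dots,1)'\in\mathbb{R}^n$. Then the partial maxima BLIEs of $\theta_1$ and $\theta_2$ are, respectively, \[ T_1=\frac{\mathbf{1}'\mathbf{E}^{-1}\mathbf{X}^*}{\mathbf{1}'\mathbf{E}^{-1}\mathbf{1}},\qquad T_2=\frac{\mathbf{1}'\mathbf{G}\mathbf{X}^*}{\mathbf{1}'\mathbf{E}^{-1}\mathbf{1}}, \] where $\mathbf{G}=\mathbf{E}^{-1}(\mathbf{1}\boldsymbol{\mu}'-\boldsymbol{\mu}\mathbf{1}')\mathbf{E}^{-1}$, and their mean squared errors are \[ \mathrm{MSE}[T_1]=\frac{\theta_2^2}{\mathbf{1}'\mathbf{E}^{-1}\mathbf{1}},\qquad \mathrm{MSE}[T_2]=\Big(1-\frac{D}{\mathbf{1}'\mathbf{E}^{-1}\mathbf{1}}\Big)\theta_2^2, \] where $D=(\mathbf{1}'\mathbf{E}^{-1}\mathbf{1})(\boldsymbol{\mu}'\mathbf{E}^{-1}\boldsymbol{\mu})-(\mathbf{1}'\mathbf{E}^{-1}\boldsymbol{\mu})^2>0$.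
   Context: $F$ is a known, parameter-free, non-degenerate distribution function on $\mathbb{R}$ with finite variance. For unknown $\theta_1\in\mathbb{R}$, $\theta_2>0$, $X_1^*,\dots,X_n^*$ are i.i.d. with distribution function $F((x-\theta_1)/\theta_2)$ and $X^*_{j:j}=\max\{X_1^*,\dots,X_j^*\}$. Let $X_1,\dots,X_n$ be i.i.d. from $F$, $X_{j:j}=\max\{X_1,\dots,X_j\}$, $\mathbf{X}=(X_{1:1},\dots,X_{n:n})'$, $\boldsymbol{\mu}=\mathbb{E}[\mathbf{X}]$, $\mathbf{E}=\mathbb{E}[\mathbf{X}\mathbf{X}']$ (positive definite). A linear statistic $L(\mathbf{X}^* )=\mathbf{c}'\mathbf{X}^*$ ($\mathbf{c}\in\mathbb{R}^n$ constant) is invariant for $\theta_1$ if $L(b\mathbf{X}^*+a\mathbf{1})=a+bL(\mathbf{X}^* )$ for all $a\in\mathbb{R}$, $b>0$ (equivalently $\mathbf{c}'\mathbf{1}=1$), and invariant for $\theta_2$ if $L(b\mathbf{X}^*+a\mathbf{1})=bL(\mathbf{X}^* )$ for all $a\in\mathbb{R}$, $b>0$ (equivalently $\mathbf{c}'\mathbf{1}=0$). The BLIE of $\theta_k$ is the linear statistic invariant for $\theta_k$ minimizing the mean squared error $\mathbb{E}[L-\theta_k]^2$. *)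

theory Defs
  imports "HOL-Probability.Probability" "Jordan_Normal_Form.Gauss_Jordan_Elimination"
begin

text \<open>Partial maximum, 0-indexed: pmax Y j w = max of Y 0 w, ..., Y j w,
  i.e. the paper's X_{(j+1):(j+1)}.\<close>
definition pmax :: "(nat \<Rightarrow> 'a \<Rightarrow> real) \<Rightarrow> nat \<Rightarrow> 'a \<Rightarrow> real" where
  "pmax Y j w = Max ((\<lambda>i. Y i w) ` {..j})"

definition pmax_vec :: "nat \<Rightarrow> (nat \<Rightarrow> 'a \<Rightarrow> real) \<Rightarrow> 'a \<Rightarrow> real vec" where
  "pmax_vec n Y w = vec n (\<lambda>j. pmax Y j w)"

definition mu_vec :: "'a measure \<Rightarrow> nat \<Rightarrow> (nat \<Rightarrow> 'a \<Rightarrow> real) \<Rightarrow> real vec" where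
  "mu_vec M n Y = vec n (\<lambda>j. integral\<^sup>L M (pmax Y j))"

definition E_mat :: "'a measure \<Rightarrow> nat \<Rightarrow> (nat \<Rightarrow> 'a \<Rightarrow> real) \<Rightarrow> real mat" where
  "E_mat M n Y = mat n n (\<lambda>(i,j). integral\<^sup>L M (\<lambda>w. pmax Y i w * pmax Y j w))"

definition ones_vec :: "nat \<Rightarrow> real vec" where
  "ones_vec n = vec n (\<lambda>_. 1)"

definition pos_def_mat :: "nat \<Rightarrow> real mat \<Rightarrow> bool" where
  "pos_def_mat n A \<longleftrightarrow> (\<forall>v\<in>carrier_vec n. v \<noteq> 0\<^sub>v n \<longrightarrow> v \<bullet> (A *\<^sub>v v) > 0)"

text \<open>Matrix inverse (meaningful for invertible square matrices).\<close>
definition inv_mat :: "real mat \<Rightarrow> real mat" where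
  "inv_mat A = the (mat_inverse A)"

definition invariant_loc :: "nat \<Rightarrow> real vec \<Rightarrow> bool" where
  "invariant_loc n c \<longleftrightarrow> (\<forall>x\<in>carrier_vec n. \<forall>a b::real. b > 0 \<longrightarrow>
      c \<bullet> (b \<cdot>\<^sub>v x + a \<cdot>\<^sub>v ones_vec n) = a + b * (c \<bullet> x))"

definition invariant_scale :: "nat \<Rightarrow> real vec \<Rightarrow> bool" where
  "invariant_scale n c \<longleftrightarrow> (\<forall>x\<in>carrier_vec n. \<forall>a b::real. b > 0 \<longrightarrow>
      c \<bullet> (b \<cdot>\<^sub>v x + a \<cdot>\<^sub>v ones_vec n) = b * (c \<bullet> x))"

definition MSE :: "'a measure \<Rightarrow> ('a \<Rightarrow> real vec) \<Rightarrow> real vec \<Rightarrow> real \<Rightarrow> real" where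
  "MSE M Xs c theta = integral\<^sup>L M (\<lambda>w. (c \<bullet> Xs w - theta)\<^sup>2)"

definition is_BLIE :: "'a measure \<Rightarrow> nat \<Rightarrow> ('a \<Rightarrow> real vec) \<Rightarrow> (real vec \<Rightarrow> bool) \<Rightarrow> real \<Rightarrow> real vec \<Rightarrow> bool" where
  "is_BLIE M n Xs Inv theta c \<longleftrightarrow> c \<in> carrier_vec n \<and> Inv c \<and>
     (\<forall>d\<in>carrier_vec n. Inv d \<longrightarrow> MSE M Xs c theta \<le> MSE M Xs d theta) \<and>
     (\<forall>d\<in>carrier_vec n. Inv d \<longrightarrow> MSE M Xs d theta \<le> MSE M Xs c theta \<longrightarrow> d = c)"

end

theory Submission
  imports Defs "Jordan_Normal_Form.Determinant"
begin
no_notation inner (infix \<open>\<bullet>\<close> 70)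
no_notation vec_nth (infixl \<open>$\<close> 90)


lemma ones_carrier[simp]: "ones_vec n \<in> carrier_vec n"
  unfolding ones_vec_def by simp

lemma dim_ones[simp]: "dim_vec (ones_vec n) = n"
  unfolding ones_vec_def by simp

lemma index_ones[simp]: "i < n \<Longrightarrow> ones_vec n $ i = 1"
  unfolding ones_vec_def by simp

lemma minus_zero_eq:
  fixes x y :: "real vec"
  assumes x: "x \<in> carrier_vec n" and y: "y \<in> carrier_vec n" and h: "x - y = 0\<^sub>v n"
  shows "x = y"
proof (rule eq_vecI)
  show "dim_vec x = dim_vec y" using x y by simp
  fix i assume i: "i < dim_vec y"
  have "(x - y) $ i = 0\<^sub>v n $ i" using h by simp
  then show "x $ i = y $ i" using i x y by simp
qed

lemma inv_loc_iff:
  assumes c: "(c::real vec) \<in> carrier_vec n"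
  shows "invariant_loc n c \<longleftrightarrow> c \<bullet> ones_vec n = 1"
proof
  assume "invariant_loc n c"
  then have h: "\<And>a b::real. 0 < b \<Longrightarrow> c \<bullet> (b \<cdot>\<^sub>v 0\<^sub>v n + a \<cdot>\<^sub>v ones_vec n) = a + b * (c \<bullet> 0\<^sub>v n)"
    unfolding invariant_loc_def using zero_carrier_vec by blast
  have "c \<bullet> (1 \<cdot>\<^sub>v 0\<^sub>v n + 1 \<cdot>\<^sub>v ones_vec n) = 1 + 1 * (c \<bullet> 0\<^sub>v n)" by (rule h) simp
  then show "c \<bullet> ones_vec n = 1" using c by simp
next
  assume h: "c \<bullet> ones_vec n = 1"
  show "invariant_loc n c" unfolding invariant_loc_def
  proof (intro ballI allI impI)
    fix x :: "real vec" and a b :: real assume x: "x \<in> carrier_vec n"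
    have "c \<bullet> (b \<cdot>\<^sub>v x + a \<cdot>\<^sub>v ones_vec n) = c \<bullet> (b \<cdot>\<^sub>v x) + c \<bullet> (a \<cdot>\<^sub>v ones_vec n)"
      by (rule scalar_prod_add_distrib[OF c]) (use x in auto)
    also have "\<dots> = a + b * (c \<bullet> x)" using c x h by simp
    finally show "c \<bullet> (b \<cdot>\<^sub>v x + a \<cdot>\<^sub>v ones_vec n) = a + b * (c \<bullet> x)" .
  qed
qed

lemma inv_scale_iff:
  assumes c: "(c::real vec) \<in> carrier_vec n"
  shows "invariant_scale n c \<longleftrightarrow> c \<bullet> ones_vec n = 0"
proof
  assume "invariant_scale n c"
  then have h: "\<And>a b::real. 0 < b \<Longrightarrow> c \<bullet> (b \<cdot>\<^sub>v 0\<^sub>v n + a \<cdot>\<^sub>v ones_vec n) = b * (c \<bullet> 0\<^sub>v n)"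
    unfolding invariant_scale_def using zero_carrier_vec by blast
  have "c \<bullet> (1 \<cdot>\<^sub>v 0\<^sub>v n + 1 \<cdot>\<^sub>v ones_vec n) = 1 * (c \<bullet> 0\<^sub>v n)" by (rule h) simp
  then show "c \<bullet> ones_vec n = 0" using c by simp
next
  assume h: "c \<bullet> ones_vec n = 0"
  show "invariant_scale n c" unfolding invariant_scale_def
  proof (intro ballI allI impI)
    fix x :: "real vec" and a b :: real assume x: "x \<in> carrier_vec n"
    have "c \<bullet> (b \<cdot>\<^sub>v x + a \<cdot>\<^sub>v ones_vec n) = c \<bullet> (b \<cdot>\<^sub>v x) + c \<bullet> (a \<cdot>\<^sub>v ones_vec n)"
      by (rule scalar_prod_add_distrib[OF c]) (use x in auto)
    also have "\<dots> = b * (c \<bullet> x)" using c x h by simp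
    finally show "c \<bullet> (b \<cdot>\<^sub>v x + a \<cdot>\<^sub>v ones_vec n) = b * (c \<bullet> x)" .
  qed
qed

lemma sym_form:
  fixes E :: "real mat"
  assumes E: "E \<in> carrier_mat n n" "transpose_mat E = E" and x: "x \<in> carrier_vec n" and y: "y \<in> carrier_vec n"
  shows "x \<bullet> (E *\<^sub>v y) = y \<bullet> (E *\<^sub>v x)"
proof -
  have "x \<bullet> (E *\<^sub>v y) = (transpose_mat E *\<^sub>v x) \<bullet> y"
    using transpose_vec_mult_scalar[OF E(1) y x] by simp
  also have "\<dots> = y \<bullet> (E *\<^sub>v x)" using E x y by (simp add: comm_scalar_prod[of _ n])
  finally show ?thesis .
qed

lemma quad_split:
  fixes E :: "real mat"
  assumes E: "E \<in> carrier_mat n n" "transpose_mat E = E" and d: "d \<in> carrier_vec n" and c: "c \<in> carrier_vec n"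
  shows "d \<bullet> (E *\<^sub>v d) = c \<bullet> (E *\<^sub>v c) + 2 * ((d - c) \<bullet> (E *\<^sub>v c)) + (d - c) \<bullet> (E *\<^sub>v (d - c))"
proof -
  have Ed: "E *\<^sub>v d \<in> carrier_vec n" and Ec: "E *\<^sub>v c \<in> carrier_vec n" using E d c by auto
  have dc: "d - c \<in> carrier_vec n" using d c by auto
  have 1: "E *\<^sub>v (d - c) = E *\<^sub>v d - E *\<^sub>v c" using E d c by (simp add: mult_minus_distrib_mat_vec)
  have 2: "(d - c) \<bullet> (E *\<^sub>v d - E *\<^sub>v c) = (d - c) \<bullet> (E *\<^sub>v d) - (d - c) \<bullet> (E *\<^sub>v c)"
    by (rule scalar_prod_minus_distrib[OF dc Ed Ec])
  have 3: "(d - c) \<bullet> (E *\<^sub>v d) = d \<bullet> (E *\<^sub>v d) - c \<bullet> (E *\<^sub>v d)"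
    by (rule minus_scalar_prod_distrib[OF d c Ed])
  have 4: "(d - c) \<bullet> (E *\<^sub>v c) = d \<bullet> (E *\<^sub>v c) - c \<bullet> (E *\<^sub>v c)"
    by (rule minus_scalar_prod_distrib[OF d c Ec])
  have 5: "c \<bullet> (E *\<^sub>v d) = d \<bullet> (E *\<^sub>v c)" by (rule sym_form[OF E c d])
  show ?thesis unfolding 1 2 3 4 5 by simp
qed

lemma quad_nonneg:
  assumes pd: "pos_def_mat n E" and E: "E \<in> carrier_mat n n" and e: "e \<in> carrier_vec n"
  shows "e \<bullet> (E *\<^sub>v e) \<ge> 0" and "e \<bullet> (E *\<^sub>v e) \<le> 0 \<Longrightarrow> e = 0\<^sub>v n"
proof -
  show "e \<bullet> (E *\<^sub>v e) \<le> 0 \<Longrightarrow> e = 0\<^sub>v n" using pd e unfolding pos_def_mat_def by force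
  show "e \<bullet> (E *\<^sub>v e) \<ge> 0"
  proof (cases "e = 0\<^sub>v n")
    case True then show ?thesis using E by simp
  next
    case False then show ?thesis using pd e unfolding pos_def_mat_def by force
  qed
qed

lemma Mt_mult:
  fixes mu a :: "real vec"
  assumes mu: "mu \<in> carrier_vec n" and a: "a \<in> carrier_vec n"
  shows "transpose_mat (mat n n (\<lambda>(i,j). ones_vec n $ i * mu $ j - mu $ i * ones_vec n $ j)) *\<^sub>v a
     = (ones_vec n \<bullet> a) \<cdot>\<^sub>v mu - (mu \<bullet> a) \<cdot>\<^sub>v ones_vec n"
proof (rule eq_vecI)
  show "dim_vec (transpose_mat (mat n n (\<lambda>(i,j). ones_vec n $ i * mu $ j - mu $ i * ones_vec n $ j)) *\<^sub>v a)
     = dim_vec ((ones_vec n \<bullet> a) \<cdot>\<^sub>v mu - (mu \<bullet> a) \<cdot>\<^sub>v ones_vec n)" using mu by (simp add: ones_vec_def)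
  fix i assume i: "i < dim_vec ((ones_vec n \<bullet> a) \<cdot>\<^sub>v mu - (mu \<bullet> a) \<cdot>\<^sub>v ones_vec n)"
  then have i: "i < n" using mu by simp
  show "(transpose_mat (mat n n (\<lambda>(i,j). ones_vec n $ i * mu $ j - mu $ i * ones_vec n $ j)) *\<^sub>v a) $ i
     = ((ones_vec n \<bullet> a) \<cdot>\<^sub>v mu - (mu \<bullet> a) \<cdot>\<^sub>v ones_vec n) $ i"
    using i mu a by (simp add: scalar_prod_def ones_vec_def sum_subtractf sum_distrib_left sum_distrib_right algebra_simps)
qed

lemma la_main:
  fixes E Ei :: "real mat" and mu :: "real vec" and f :: "real vec \<Rightarrow> real \<Rightarrow> real" and th1 th2 :: real
  assumes Ecar: "E \<in> carrier_mat n n" and Esym: "transpose_mat E = E" and pd: "pos_def_mat n E"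
    and Eicar: "Ei \<in> carrier_mat n n" and EEi: "E * Ei = 1\<^sub>m n" and EiE: "Ei * E = 1\<^sub>m n"
    and mucar: "mu \<in> carrier_vec n" and np: "\<And>k. mu \<noteq> k \<cdot>\<^sub>v ones_vec n" and th2: "th2 > 0"
    and f: "\<And>d t. d \<in> carrier_vec n \<Longrightarrow> f d t = (th1 * (d \<bullet> ones_vec n) - t)\<^sup>2
        + 2 * (th1 * (d \<bullet> ones_vec n) - t) * th2 * (d \<bullet> mu) + th2\<^sup>2 * (d \<bullet> (E *\<^sub>v d))"
  defines "ones \<equiv> ones_vec n"
  defines "G \<equiv> Ei * mat n n (\<lambda>(i,j). ones $ i * mu $ j - mu $ i * ones $ j) * Ei"
    and "Q \<equiv> ones \<bullet> (Ei *\<^sub>v ones)"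
  defines "D \<equiv> Q * (mu \<bullet> (Ei *\<^sub>v mu)) - (ones \<bullet> (Ei *\<^sub>v mu))\<^sup>2"
    and "c1 \<equiv> (1 / Q) \<cdot>\<^sub>v (transpose_mat Ei *\<^sub>v ones)"
    and "c2 \<equiv> (1 / Q) \<cdot>\<^sub>v (transpose_mat G *\<^sub>v ones)"
  shows "(c1 \<in> carrier_vec n \<and> invariant_loc n c1 \<and>
          (\<forall>d\<in>carrier_vec n. invariant_loc n d \<longrightarrow> f c1 th1 \<le> f d th1) \<and>
          (\<forall>d\<in>carrier_vec n. invariant_loc n d \<longrightarrow> f d th1 \<le> f c1 th1 \<longrightarrow> d = c1))
       \<and> (c2 \<in> carrier_vec n \<and> invariant_scale n c2 \<and>
          (\<forall>d\<in>carrier_vec n. invariant_scale n d \<longrightarrow> f c2 th2 \<le> f d th2) \<and>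
          (\<forall>d\<in>carrier_vec n. invariant_scale n d \<longrightarrow> f d th2 \<le> f c2 th2 \<longrightarrow> d = c2))
       \<and> f c1 th1 = th2\<^sup>2 / Q
       \<and> f c2 th2 = (1 - D / Q) * th2\<^sup>2
       \<and> D > 0"
proof -
  have oc: "ones \<in> carrier_vec n" unfolding ones_def by simp
  have Eisym: "transpose_mat Ei = Ei"
  proof -
    have "transpose_mat Ei * E = 1\<^sub>m n"
      using transpose_mult[OF Ecar Eicar] EEi Esym by simp
    note h = this
    have "transpose_mat Ei = transpose_mat Ei * (E * Ei)" using EEi Eicar by simp
    also have "\<dots> = (transpose_mat Ei * E) * Ei" using Eicar Ecar by (simp add: assoc_mult_mat[of _ n n _ n _ n])
    also have "\<dots> = Ei" using h Eicar by simp
    finally show ?thesis .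
  qed
  define a where "a = Ei *\<^sub>v ones"
  define b where "b = Ei *\<^sub>v mu"
  define P where "P = ones \<bullet> b"
  define R where "R = mu \<bullet> b"
  have ac: "a \<in> carrier_vec n" and bc: "b \<in> carrier_vec n" using Eicar oc mucar by (auto simp: a_def b_def)
  have Ea: "E *\<^sub>v a = ones"
  proof -
    have "E *\<^sub>v a = (E * Ei) *\<^sub>v ones" unfolding a_def using Ecar Eicar oc by simp
    then show ?thesis using EEi oc by simp
  qed
  have Eb: "E *\<^sub>v b = mu"
  proof -
    have "E *\<^sub>v b = (E * Ei) *\<^sub>v mu" unfolding b_def using Ecar Eicar mucar by simp
    then show ?thesis using EEi mucar by simp
  qed
  have Qa: "Q = ones \<bullet> a" unfolding Q_def a_def ..
  have mua: "mu \<bullet> a = P" unfolding P_def a_def b_def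
    by (rule sym_form[OF Eicar Eisym mucar oc])
  have amu: "a \<bullet> mu = P" using mua comm_scalar_prod[OF ac mucar] by simp
  have bo: "b \<bullet> ones = P" unfolding P_def using comm_scalar_prod[OF bc oc] by simp
  have ao: "a \<bullet> ones = Q" unfolding Qa using comm_scalar_prod[OF ac oc] by simp
  have bmu: "b \<bullet> mu = R" unfolding R_def using comm_scalar_prod[OF bc mucar] by simp
  have DR: "D = Q * R - P\<^sup>2" unfolding D_def R_def P_def b_def ..
  have npos: "n > 0"
  proof (rule ccontr)
    assume "\<not> n > 0"
    then have "n = 0" by simp
    then have "mu = 0 \<cdot>\<^sub>v ones_vec n" using mucar by (intro eq_vecI) (auto simp: ones_vec_def)
    then show False using np by blast
  qed
  have onz: "ones \<noteq> 0\<^sub>v n"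
  proof
    assume "ones = 0\<^sub>v n"
    then have "ones $ 0 = 0\<^sub>v n $ 0" by simp
    then show False using npos unfolding ones_def ones_vec_def by simp
  qed
  have anz: "a \<noteq> 0\<^sub>v n" using Ea onz Ecar by auto
  have Qpos: "Q > 0"
  proof -
    have Eac: "E *\<^sub>v a \<in> carrier_vec n" using Ecar ac by simp
    have "Q = a \<bullet> (E *\<^sub>v a)" unfolding Qa Ea[symmetric] using comm_scalar_prod[OF ac Eac] by simp
    then show ?thesis using pd ac anz unfolding pos_def_mat_def by simp
  qed
  have c1eq: "c1 = (1 / Q) \<cdot>\<^sub>v a" unfolding c1_def a_def Eisym ..
  have c1c: "c1 \<in> carrier_vec n" unfolding c1eq using ac by simp
  have c2eq: "c2 = b - (P / Q) \<cdot>\<^sub>v a"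
  proof -
    define Mm where "Mm = mat n n (\<lambda>(i,j). ones $ i * mu $ j - mu $ i * ones $ j)"
    have Mmc: "Mm \<in> carrier_mat n n" unfolding Mm_def by simp
    have "transpose_mat G = Ei * (transpose_mat Mm * Ei)"
      unfolding G_def Mm_def[symmetric] using Eicar Mmc
      by (simp add: transpose_mult[of _ n n _ n] Eisym)
    then have "transpose_mat G *\<^sub>v ones = Ei *\<^sub>v (transpose_mat Mm *\<^sub>v a)"
    proof -
      have MmTc: "transpose_mat Mm \<in> carrier_mat n n" using Mmc by simp
      have "(Ei * (transpose_mat Mm * Ei)) *\<^sub>v ones = Ei *\<^sub>v ((transpose_mat Mm * Ei) *\<^sub>v ones)"
        by (rule assoc_mult_mat_vec[OF Eicar _ oc]) (use MmTc Eicar in simp)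
      also have "(transpose_mat Mm * Ei) *\<^sub>v ones = transpose_mat Mm *\<^sub>v (Ei *\<^sub>v ones)"
        by (rule assoc_mult_mat_vec[OF MmTc Eicar oc])
      finally show ?thesis unfolding a_def using \<open>transpose_mat G = Ei * (transpose_mat Mm * Ei)\<close> by simp
    qed
    also have "transpose_mat Mm *\<^sub>v a = Q \<cdot>\<^sub>v mu - P \<cdot>\<^sub>v ones"
      unfolding Mm_def ones_def using Mt_mult[OF mucar ac] mua Qa ones_def by simp
    also have "Ei *\<^sub>v (Q \<cdot>\<^sub>v mu - P \<cdot>\<^sub>v ones) = Q \<cdot>\<^sub>v b - P \<cdot>\<^sub>v a"
      unfolding a_def b_def using Eicar mucar oc
      by (simp add: mult_minus_distrib_mat_vec mult_mat_vec)
    finally have "transpose_mat G *\<^sub>v ones = Q \<cdot>\<^sub>v b - P \<cdot>\<^sub>v a" .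
    then show ?thesis unfolding c2_def using Qpos ac bc
      by (intro eq_vecI) (auto simp: field_simps)
  qed
  have c2c: "c2 \<in> carrier_vec n" unfolding c2eq using ac bc by simp
  have Qnz: "Q \<noteq> 0" using Qpos by simp
  have Ec1: "E *\<^sub>v c1 = (1 / Q) \<cdot>\<^sub>v ones"
    unfolding c1eq using Ecar ac Ea by (simp add: mult_mat_vec)
  have c1o: "c1 \<bullet> ones = 1" unfolding c1eq using ac oc ao Qnz by simp
  have qc1: "c1 \<bullet> (E *\<^sub>v c1) = 1 / Q" unfolding Ec1 using c1c oc c1o by simp
  have split1: "d \<bullet> (E *\<^sub>v d) = 1 / Q + (d - c1) \<bullet> (E *\<^sub>v (d - c1))"
    if d: "d \<in> carrier_vec n" "d \<bullet> ones = 1" for d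
  proof -
    have dc: "d - c1 \<in> carrier_vec n" using d c1c by simp
    have "(d - c1) \<bullet> (E *\<^sub>v c1) = (1 / Q) * ((d - c1) \<bullet> ones)" unfolding Ec1 using dc oc by simp
    also have "(d - c1) \<bullet> ones = d \<bullet> ones - c1 \<bullet> ones" by (rule minus_scalar_prod_distrib[OF d(1) c1c oc])
    finally have "(d - c1) \<bullet> (E *\<^sub>v c1) = 0" using d c1o by simp
    then show ?thesis using quad_split[OF Ecar Esym d(1) c1c] qc1 by simp
  qed
  have f1: "f d th1 = th2\<^sup>2 * (d \<bullet> (E *\<^sub>v d))" if "d \<in> carrier_vec n" "d \<bullet> ones = 1" for d
    using f[OF that(1), of th1] that(2) unfolding ones_def by simp
  have fc1: "f c1 th1 = th2\<^sup>2 / Q" using f1[OF c1c c1o] qc1 by simp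
  have part1: "c1 \<in> carrier_vec n \<and> invariant_loc n c1 \<and>
          (\<forall>d\<in>carrier_vec n. invariant_loc n d \<longrightarrow> f c1 th1 \<le> f d th1) \<and>
          (\<forall>d\<in>carrier_vec n. invariant_loc n d \<longrightarrow> f d th1 \<le> f c1 th1 \<longrightarrow> d = c1)"
  proof (intro conjI ballI impI)
    show "c1 \<in> carrier_vec n" by (rule c1c)
    show "invariant_loc n c1" using inv_loc_iff[OF c1c] c1o unfolding ones_def by simp
  next
    fix d assume d: "d \<in> carrier_vec n" and "invariant_loc n d"
    then have d1: "d \<bullet> ones = 1" using inv_loc_iff[OF d] unfolding ones_def by simp
    have dc: "d - c1 \<in> carrier_vec n" using d c1c by simp
    have nn: "(d - c1) \<bullet> (E *\<^sub>v (d - c1)) \<ge> 0" by (rule quad_nonneg(1)[OF pd Ecar dc])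
    have fd: "f d th1 = th2\<^sup>2 / Q + th2\<^sup>2 * ((d - c1) \<bullet> (E *\<^sub>v (d - c1)))"
      using f1[OF d d1] split1[OF d d1] by (simp add: algebra_simps)
    show "f c1 th1 \<le> f d th1" unfolding fd fc1 using nn by simp
    {
      assume "f d th1 \<le> f c1 th1"
      then have "th2\<^sup>2 * ((d - c1) \<bullet> (E *\<^sub>v (d - c1))) \<le> 0" unfolding fd fc1 by simp
      then have "(d - c1) \<bullet> (E *\<^sub>v (d - c1)) \<le> 0" using th2
        by (simp add: mult_le_0_iff)
      then have "d - c1 = 0\<^sub>v n" by (rule quad_nonneg(2)[OF pd Ecar dc])
      then show "d = c1" using minus_zero_eq[OF d c1c] by simp
    }
  qed
  have Ec2: "E *\<^sub>v c2 = mu - (P / Q) \<cdot>\<^sub>v ones"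
    unfolding c2eq using Ecar ac bc Ea Eb by (simp add: mult_minus_distrib_mat_vec mult_mat_vec)
  have c2o: "c2 \<bullet> ones = 0"
  proof -
    have "c2 \<bullet> ones = b \<bullet> ones - ((P / Q) \<cdot>\<^sub>v a) \<bullet> ones" unfolding c2eq
      by (rule minus_scalar_prod_distrib) (use ac bc oc in auto)
    then show ?thesis using bo ao ac oc Qnz by simp
  qed
  have c2mu: "c2 \<bullet> mu = D / Q"
  proof -
    have "c2 \<bullet> mu = b \<bullet> mu - ((P / Q) \<cdot>\<^sub>v a) \<bullet> mu" unfolding c2eq
      by (rule minus_scalar_prod_distrib) (use ac bc mucar in auto)
    then show ?thesis using bmu amu ac mucar Qnz unfolding DR by (simp add: field_simps power2_eq_square)
  qed
  have qc2: "c2 \<bullet> (E *\<^sub>v c2) = D / Q"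
  proof -
    have "c2 \<bullet> (E *\<^sub>v c2) = c2 \<bullet> mu - c2 \<bullet> ((P / Q) \<cdot>\<^sub>v ones)" unfolding Ec2
      by (rule scalar_prod_minus_distrib) (use c2c mucar oc in auto)
    then show ?thesis using c2mu c2o c2c oc by simp
  qed
  have f2: "f d th2 = th2\<^sup>2 * (1 - 2 * (d \<bullet> mu) + d \<bullet> (E *\<^sub>v d))" if "d \<in> carrier_vec n" "d \<bullet> ones = 0" for d
    using f[OF that(1), of th2] that(2) unfolding ones_def by (simp add: algebra_simps power2_eq_square)
  have split2: "d \<bullet> (E *\<^sub>v d) = D / Q + 2 * (d \<bullet> mu - D / Q) + (d - c2) \<bullet> (E *\<^sub>v (d - c2))"
    if d: "d \<in> carrier_vec n" "d \<bullet> ones = 0" for d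
  proof -
    have dc: "d - c2 \<in> carrier_vec n" using d c2c by simp
    have "(d - c2) \<bullet> (E *\<^sub>v c2) = (d - c2) \<bullet> mu - (d - c2) \<bullet> ((P / Q) \<cdot>\<^sub>v ones)" unfolding Ec2
      by (rule scalar_prod_minus_distrib) (use dc mucar oc in auto)
    also have "(d - c2) \<bullet> mu = d \<bullet> mu - c2 \<bullet> mu" by (rule minus_scalar_prod_distrib[OF d(1) c2c mucar])
    also have "(d - c2) \<bullet> ((P / Q) \<cdot>\<^sub>v ones) = (P / Q) * ((d - c2) \<bullet> ones)" using dc oc by simp
    also have "(d - c2) \<bullet> ones = d \<bullet> ones - c2 \<bullet> ones" by (rule minus_scalar_prod_distrib[OF d(1) c2c oc])
    finally have "(d - c2) \<bullet> (E *\<^sub>v c2) = d \<bullet> mu - D / Q" using d c2o c2mu by simp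
    then show ?thesis using quad_split[OF Ecar Esym d(1) c2c] qc2 by simp
  qed
  have fc2: "f c2 th2 = (1 - D / Q) * th2\<^sup>2" using f2[OF c2c c2o] qc2 c2mu by (simp add: algebra_simps)
  have part2: "c2 \<in> carrier_vec n \<and> invariant_scale n c2 \<and>
          (\<forall>d\<in>carrier_vec n. invariant_scale n d \<longrightarrow> f c2 th2 \<le> f d th2) \<and>
          (\<forall>d\<in>carrier_vec n. invariant_scale n d \<longrightarrow> f d th2 \<le> f c2 th2 \<longrightarrow> d = c2)"
  proof (intro conjI ballI impI)
    show "c2 \<in> carrier_vec n" by (rule c2c)
    show "invariant_scale n c2" using inv_scale_iff[OF c2c] c2o unfolding ones_def by simp
  next
    fix d assume d: "d \<in> carrier_vec n" and "invariant_scale n d"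
    then have d1: "d \<bullet> ones = 0" using inv_scale_iff[OF d] unfolding ones_def by simp
    have dc: "d - c2 \<in> carrier_vec n" using d c2c by simp
    have nn: "(d - c2) \<bullet> (E *\<^sub>v (d - c2)) \<ge> 0" by (rule quad_nonneg(1)[OF pd Ecar dc])
    have fd: "f d th2 = (1 - D / Q) * th2\<^sup>2 + th2\<^sup>2 * ((d - c2) \<bullet> (E *\<^sub>v (d - c2)))"
      using f2[OF d d1] split2[OF d d1] by (simp add: algebra_simps)
    show "f c2 th2 \<le> f d th2" unfolding fd fc2 using nn by simp
    {
      assume "f d th2 \<le> f c2 th2"
      then have "th2\<^sup>2 * ((d - c2) \<bullet> (E *\<^sub>v (d - c2))) \<le> 0" unfolding fd fc2 by simp
      then have "(d - c2) \<bullet> (E *\<^sub>v (d - c2)) \<le> 0" using th2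
        by (simp add: mult_le_0_iff)
      then have "d - c2 = 0\<^sub>v n" by (rule quad_nonneg(2)[OF pd Ecar dc])
      then show "d = c2" using minus_zero_eq[OF d c2c] by simp
    }
  qed
  have Dpos: "D > 0"
  proof -
    have "c2 \<noteq> 0\<^sub>v n"
    proof
      assume "c2 = 0\<^sub>v n"
      moreover have "E *\<^sub>v 0\<^sub>v n = 0\<^sub>v n" using Ecar by (intro eq_vecI) auto
      ultimately have "mu - (P / Q) \<cdot>\<^sub>v ones = 0\<^sub>v n" using Ec2 by simp
      then have "mu = (P / Q) \<cdot>\<^sub>v ones_vec n" using minus_zero_eq[OF mucar, of "(P / Q) \<cdot>\<^sub>v ones"] oc unfolding ones_def by simp
      then show False using np by blast
    qed
    then have "c2 \<bullet> (E *\<^sub>v c2) > 0" using pd c2c unfolding pos_def_mat_def by blast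
    then have "D / Q > 0" using qc2 by simp
    then show ?thesis using Qpos by (simp add: zero_less_divide_iff)
  qed
  show ?thesis using part1 part2 fc1 fc2 Dpos by blast
qed



lemma pmax_in: "\<exists>k\<le>j. pmax Y j w = Y k w"
proof -
  have "Max ((\<lambda>i. Y i w) ` {..j}) \<in> (\<lambda>i. Y i w) ` {..j}" by (rule Max_in) auto
  then obtain k where "k \<in> {..j}" "Max ((\<lambda>i. Y i w) ` {..j}) = Y k w" by blast
  then show ?thesis unfolding pmax_def by auto
qed

lemma pmax_meas:
  assumes "\<And>i. i \<le> j \<Longrightarrow> Y i \<in> borel_measurable M"
  shows "pmax Y j \<in> borel_measurable M"
proof -
  have "pmax Y j = (\<lambda>w. Max ((\<lambda>i. Y i w) ` {..j}))" by (rule ext) (simp add: pmax_def)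
  also have "\<dots> \<in> borel_measurable M" by (rule borel_measurable_Max) (use assms in auto)
  finally show ?thesis .
qed

lemma pmax_sq_bound:
  assumes "j < n"
  shows "(pmax Y j w)\<^sup>2 \<le> (\<Sum>k<n. (Y k w)\<^sup>2)"
proof -
  obtain k where k: "k \<le> j" "pmax Y j w = Y k w" using pmax_in[where j=j and Y=Y and w=w] by blast
  have kn: "k \<in> {..<n}" using k assms by simp
  have "(Y k w)\<^sup>2 \<le> (\<Sum>i<n. (Y i w)\<^sup>2)"
    by (rule member_le_sum[of k "{..<n}" "\<lambda>i. (Y i w)\<^sup>2", OF kn]) simp_all
  then show ?thesis using k by simp
qed

lemma pmax_abs_bound:
  assumes "j < n"
  shows "\<bar>pmax Y j w\<bar> \<le> (\<Sum>k<n. \<bar>Y k w\<bar>)"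
proof -
  obtain k where k: "k \<le> j" "pmax Y j w = Y k w" using pmax_in[where j=j and Y=Y and w=w] by blast
  have kn: "k \<in> {..<n}" using k assms by simp
  have "\<bar>Y k w\<bar> \<le> (\<Sum>i<n. \<bar>Y i w\<bar>)"
    by (rule member_le_sum[of k "{..<n}" "\<lambda>i. \<bar>Y i w\<bar>", OF kn]) simp_all
  then show ?thesis using k by simp
qed

lemma abs_prod_le_sq: "\<bar>(x::real) * y\<bar> \<le> x\<^sup>2 + y\<^sup>2"
proof -
  have "2 * x * y \<le> x\<^sup>2 + y\<^sup>2" by (rule sum_squares_bound)
  moreover have "2 * (-x) * y \<le> (-x)\<^sup>2 + y\<^sup>2" by (rule sum_squares_bound)
  moreover have "0 \<le> x\<^sup>2 + y\<^sup>2" by simp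
  ultimately show ?thesis by (simp add: abs_le_iff)
qed

lemma binom_sq: "((a::real) + b * x)\<^sup>2 = a\<^sup>2 + 2 * a * b * x + b\<^sup>2 * x\<^sup>2"
  by (simp add: power2_eq_square algebra_simps)

locale pm_setup =
  fixes M :: "'a measure" and Y :: "nat \<Rightarrow> 'a \<Rightarrow> real" and n :: nat
  assumes ps: "prob_space M"
    and rv: "\<And>i. i < n \<Longrightarrow> Y i \<in> borel_measurable M"
    and finvar: "\<And>i. i < n \<Longrightarrow> integrable M (\<lambda>w. (Y i w)\<^sup>2)"
begin

lemma intY: "i < n \<Longrightarrow> integrable M (Y i)"
proof -
  assume i: "i < n"
  interpret prob_space M by (rule ps)
  show ?thesis by (rule square_integrable_imp_integrable[OF rv[OF i] finvar[OF i]])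
qed

lemma meas_pmax: "j < n \<Longrightarrow> pmax Y j \<in> borel_measurable M"
  by (rule pmax_meas) (use rv in auto)

lemma int_pmax: "j < n \<Longrightarrow> integrable M (pmax Y j)"
proof -
  assume j: "j < n"
  have "integrable M (\<lambda>w. \<Sum>k<n. \<bar>Y k w\<bar>)" using intY by auto
  then show ?thesis
  proof (rule Bochner_Integration.integrable_bound)
    show "pmax Y j \<in> borel_measurable M" by (rule meas_pmax[OF j])
    show "AE w in M. norm (pmax Y j w) \<le> norm (\<Sum>k<n. \<bar>Y k w\<bar>)"
    proof (rule AE_I2)
      fix w
      have "0 \<le> (\<Sum>k<n. \<bar>Y k w\<bar>)" by (rule sum_nonneg) simp
      then show "norm (pmax Y j w) \<le> norm (\<Sum>k<n. \<bar>Y k w\<bar>)"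
        using pmax_abs_bound[OF j, of Y w] by simp
    qed
  qed
qed

lemma int_prod: "i < n \<Longrightarrow> j < n \<Longrightarrow> integrable M (\<lambda>w. pmax Y i w * pmax Y j w)"
proof -
  assume i: "i < n" and j: "j < n"
  have "integrable M (\<lambda>w. 2 * (\<Sum>k<n. (Y k w)\<^sup>2))" using finvar by auto
  then show ?thesis
  proof (rule Bochner_Integration.integrable_bound)
    show "(\<lambda>w. pmax Y i w * pmax Y j w) \<in> borel_measurable M"
      using meas_pmax[OF i] meas_pmax[OF j] by measurable
    show "AE w in M. norm (pmax Y i w * pmax Y j w) \<le> norm (2 * (\<Sum>k<n. (Y k w)\<^sup>2))"
    proof (rule AE_I2)
      fix w
      have "0 \<le> (\<Sum>k<n. (Y k w)\<^sup>2)" by (rule sum_nonneg) simp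
      moreover have "\<bar>pmax Y i w * pmax Y j w\<bar> \<le> (pmax Y i w)\<^sup>2 + (pmax Y j w)\<^sup>2" by (rule abs_prod_le_sq)
      ultimately show "norm (pmax Y i w * pmax Y j w) \<le> norm (2 * (\<Sum>k<n. (Y k w)\<^sup>2))"
        using pmax_sq_bound[OF i, of Y w] pmax_sq_bound[OF j, of Y w] by simp
    qed
  qed
qed

lemma mse_expand:
  fixes d :: "real vec"
  assumes d: "d \<in> carrier_vec n"
  shows "integral\<^sup>L M (\<lambda>w. (\<alpha> + \<beta> * (d \<bullet> pmax_vec n Y w))\<^sup>2)
    = \<alpha>\<^sup>2 + 2 * \<alpha> * \<beta> * (d \<bullet> mu_vec M n Y) + \<beta>\<^sup>2 * (d \<bullet> (E_mat M n Y *\<^sub>v d))"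
proof -
  interpret prob_space M by (rule ps)
  have sX: "d \<bullet> pmax_vec n Y w = (\<Sum>j\<in>{0..<n}. d $ j * pmax Y j w)" for w
    unfolding scalar_prod_def pmax_vec_def by simp
  have sq: "(\<alpha> + \<beta> * (d \<bullet> pmax_vec n Y w))\<^sup>2 = \<alpha>\<^sup>2 + 2 * \<alpha> * \<beta> * (\<Sum>j\<in>{0..<n}. d $ j * pmax Y j w)
     + \<beta>\<^sup>2 * (\<Sum>i\<in>{0..<n}. \<Sum>j\<in>{0..<n}. d $ i * d $ j * (pmax Y i w * pmax Y j w))" for w
  proof -
    have "(\<Sum>j\<in>{0..<n}. d $ j * pmax Y j w)\<^sup>2 = (\<Sum>i\<in>{0..<n}. \<Sum>j\<in>{0..<n}. d $ i * pmax Y i w * (d $ j * pmax Y j w))"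
      unfolding power2_eq_square sum_product ..
    also have "\<dots> = (\<Sum>i\<in>{0..<n}. \<Sum>j\<in>{0..<n}. d $ i * d $ j * (pmax Y i w * pmax Y j w))"
      by (rule sum.cong[OF refl], rule sum.cong[OF refl]) (simp only: mult_ac)
    finally have h: "(\<Sum>j\<in>{0..<n}. d $ j * pmax Y j w)\<^sup>2 = (\<Sum>i\<in>{0..<n}. \<Sum>j\<in>{0..<n}. d $ i * d $ j * (pmax Y i w * pmax Y j w))" .
    have "(\<alpha> + \<beta> * (\<Sum>j\<in>{0..<n}. d $ j * pmax Y j w))\<^sup>2 = \<alpha>\<^sup>2 + 2 * \<alpha> * \<beta> * (\<Sum>j\<in>{0..<n}. d $ j * pmax Y j w)
       + \<beta>\<^sup>2 * (\<Sum>j\<in>{0..<n}. d $ j * pmax Y j w)\<^sup>2"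
      by (rule binom_sq)
    then show ?thesis unfolding sX h .
  qed
  have i1a: "integrable M (\<lambda>w. d $ j * pmax Y j w)" if "j \<in> {0..<n}" for j
    using int_pmax[of j] that by simp
  have i1: "integrable M (\<lambda>w. \<Sum>j\<in>{0..<n}. d $ j * pmax Y j w)"
    by (rule Bochner_Integration.integrable_sum) (rule i1a)
  have i2a: "integrable M (\<lambda>w. d $ i * d $ j * (pmax Y i w * pmax Y j w))" if "i \<in> {0..<n}" "j \<in> {0..<n}" for i j
    using int_prod[of i j] that by simp
  have i2b: "integrable M (\<lambda>w. \<Sum>j\<in>{0..<n}. d $ i * d $ j * (pmax Y i w * pmax Y j w))" if "i \<in> {0..<n}" for i
    by (rule Bochner_Integration.integrable_sum) (rule i2a[OF that])
  have i2: "integrable M (\<lambda>w. \<Sum>i\<in>{0..<n}. \<Sum>j\<in>{0..<n}. d $ i * d $ j * (pmax Y i w * pmax Y j w))"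
    by (rule Bochner_Integration.integrable_sum) (rule i2b)
  have I1: "integral\<^sup>L M (\<lambda>w. \<Sum>j\<in>{0..<n}. d $ j * pmax Y j w) = d \<bullet> mu_vec M n Y"
  proof -
    have "integral\<^sup>L M (\<lambda>w. \<Sum>j\<in>{0..<n}. d $ j * pmax Y j w) = (\<Sum>j\<in>{0..<n}. integral\<^sup>L M (\<lambda>w. d $ j * pmax Y j w))"
      by (rule Bochner_Integration.integral_sum) (rule i1a)
    also have "\<dots> = (\<Sum>j\<in>{0..<n}. d $ j * integral\<^sup>L M (pmax Y j))"
      by (rule sum.cong[OF refl]) (rule integral_mult_right_zero)
    also have "\<dots> = d \<bullet> mu_vec M n Y"
      unfolding scalar_prod_def mu_vec_def by (rule sum.cong) auto
    finally show ?thesis .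
  qed
  have I2: "integral\<^sup>L M (\<lambda>w. \<Sum>i\<in>{0..<n}. \<Sum>j\<in>{0..<n}. d $ i * d $ j * (pmax Y i w * pmax Y j w))
      = d \<bullet> (E_mat M n Y *\<^sub>v d)"
  proof -
    have "integral\<^sup>L M (\<lambda>w. \<Sum>i\<in>{0..<n}. \<Sum>j\<in>{0..<n}. d $ i * d $ j * (pmax Y i w * pmax Y j w))
       = (\<Sum>i\<in>{0..<n}. integral\<^sup>L M (\<lambda>w. \<Sum>j\<in>{0..<n}. d $ i * d $ j * (pmax Y i w * pmax Y j w)))"
      by (rule Bochner_Integration.integral_sum) (rule i2b)
    also have "\<dots> = (\<Sum>i\<in>{0..<n}. \<Sum>j\<in>{0..<n}. integral\<^sup>L M (\<lambda>w. d $ i * d $ j * (pmax Y i w * pmax Y j w)))"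
      by (rule sum.cong[OF refl], rule Bochner_Integration.integral_sum) (rule i2a)
    also have "\<dots> = (\<Sum>i\<in>{0..<n}. \<Sum>j\<in>{0..<n}. d $ i * (integral\<^sup>L M (\<lambda>w. pmax Y i w * pmax Y j w) * d $ j))"
      by (rule sum.cong[OF refl], rule sum.cong[OF refl]) (simp only: integral_mult_right_zero mult_ac)
    also have "\<dots> = (\<Sum>i\<in>{0..<n}. d $ i * (\<Sum>j\<in>{0..<n}. integral\<^sup>L M (\<lambda>w. pmax Y i w * pmax Y j w) * d $ j))"
      by (simp only: sum_distrib_left)
    also have "\<dots> = d \<bullet> (E_mat M n Y *\<^sub>v d)"
    proof -
      have Ed: "(E_mat M n Y *\<^sub>v d) $ i = (\<Sum>j\<in>{0..<n}. integral\<^sup>L M (\<lambda>w. pmax Y i w * pmax Y j w) * d $ j)"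
        if i: "i < n" for i
      proof -
        have "(E_mat M n Y *\<^sub>v d) $ i = row (E_mat M n Y) i \<bullet> d" using i by (simp add: E_mat_def)
        also have "\<dots> = (\<Sum>j\<in>{0..<n}. row (E_mat M n Y) i $ j * d $ j)" unfolding scalar_prod_def using d by simp
        also have "\<dots> = (\<Sum>j\<in>{0..<n}. integral\<^sup>L M (\<lambda>w. pmax Y i w * pmax Y j w) * d $ j)"
          by (rule sum.cong[OF refl]) (use i in \<open>simp add: E_mat_def\<close>)
        finally show ?thesis .
      qed
      have "d \<bullet> (E_mat M n Y *\<^sub>v d) = (\<Sum>i\<in>{0..<n}. d $ i * (E_mat M n Y *\<^sub>v d) $ i)"
        unfolding scalar_prod_def by (simp add: E_mat_def)
      also have "\<dots> = (\<Sum>i\<in>{0..<n}. d $ i * (\<Sum>j\<in>{0..<n}. integral\<^sup>L M (\<lambda>w. pmax Y i w * pmax Y j w) * d $ j))"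
        by (rule sum.cong[OF refl]) (simp add: Ed)
      finally show ?thesis by simp
    qed
    finally show ?thesis .
  qed
  have "integral\<^sup>L M (\<lambda>w. (\<alpha> + \<beta> * (d \<bullet> pmax_vec n Y w))\<^sup>2)
     = integral\<^sup>L M (\<lambda>w. \<alpha>\<^sup>2 + 2 * \<alpha> * \<beta> * (\<Sum>j\<in>{0..<n}. d $ j * pmax Y j w)
     + \<beta>\<^sup>2 * (\<Sum>i\<in>{0..<n}. \<Sum>j\<in>{0..<n}. d $ i * d $ j * (pmax Y i w * pmax Y j w)))"
    unfolding sq ..
  also have "\<dots> = \<alpha>\<^sup>2 + 2 * \<alpha> * \<beta> * integral\<^sup>L M (\<lambda>w. \<Sum>j\<in>{0..<n}. d $ j * pmax Y j w)
     + \<beta>\<^sup>2 * integral\<^sup>L M (\<lambda>w. \<Sum>i\<in>{0..<n}. \<Sum>j\<in>{0..<n}. d $ i * d $ j * (pmax Y i w * pmax Y j w))"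
  proof -
    let ?S1 = "\<lambda>w. \<Sum>j\<in>{0..<n}. d $ j * pmax Y j w"
    let ?S2 = "\<lambda>w. \<Sum>i\<in>{0..<n}. \<Sum>j\<in>{0..<n}. d $ i * d $ j * (pmax Y i w * pmax Y j w)"
    have ia: "integrable M (\<lambda>w. \<alpha>\<^sup>2 + 2 * \<alpha> * \<beta> * ?S1 w)"
      by (rule Bochner_Integration.integrable_add) (auto intro: i1)
    have ib: "integrable M (\<lambda>w. \<beta>\<^sup>2 * ?S2 w)" using i2 by auto
    have "integral\<^sup>L M (\<lambda>w. \<alpha>\<^sup>2 + 2 * \<alpha> * \<beta> * ?S1 w + \<beta>\<^sup>2 * ?S2 w)
        = integral\<^sup>L M (\<lambda>w. \<alpha>\<^sup>2 + 2 * \<alpha> * \<beta> * ?S1 w) + integral\<^sup>L M (\<lambda>w. \<beta>\<^sup>2 * ?S2 w)"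
      by (rule Bochner_Integration.integral_add[OF ia ib])
    also have "integral\<^sup>L M (\<lambda>w. \<alpha>\<^sup>2 + 2 * \<alpha> * \<beta> * ?S1 w)
        = integral\<^sup>L M (\<lambda>w. \<alpha>\<^sup>2) + integral\<^sup>L M (\<lambda>w. 2 * \<alpha> * \<beta> * ?S1 w)"
      by (rule Bochner_Integration.integral_add) (auto intro: i1)
    also have "integral\<^sup>L M (\<lambda>w. \<alpha>\<^sup>2) = \<alpha>\<^sup>2" by (simp add: prob_space)
    also have "integral\<^sup>L M (\<lambda>w. 2 * \<alpha> * \<beta> * ?S1 w) = 2 * \<alpha> * \<beta> * integral\<^sup>L M ?S1"
      by (rule integral_mult_right_zero)
    also have "integral\<^sup>L M (\<lambda>w. \<beta>\<^sup>2 * ?S2 w) = \<beta>\<^sup>2 * integral\<^sup>L M ?S2"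
      by (rule integral_mult_right_zero)
    finally show ?thesis .
  qed
  finally show ?thesis unfolding I1 I2 .
qed

end



lemma posdef_inv:
  fixes E :: "real mat"
  assumes E: "E \<in> carrier_mat n n" and pd: "pos_def_mat n E"
  shows "inv_mat E \<in> carrier_mat n n \<and> E * inv_mat E = 1\<^sub>m n \<and> inv_mat E * E = 1\<^sub>m n"
proof -
  have "Determinant.det E \<noteq> 0"
  proof
    assume "Determinant.det E = 0"
    then obtain v where v: "v \<in> carrier_vec n" "v \<noteq> 0\<^sub>v n" "E *\<^sub>v v = 0\<^sub>v n"
      using det_0_iff_vec_prod_zero_field[OF E] by blast
    then have "v \<bullet> (E *\<^sub>v v) > 0" using pd unfolding pos_def_mat_def by blast
    then show False using v by simp
  qed
  from det_non_zero_imp_unit[OF E this, of "()"]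
  have U: "E \<in> Units (ring_mat TYPE(real) n ())" .
  have "mat_inverse E \<noteq> None" using mat_inverse(1)[OF E, of "()"] U by blast
  then obtain B where B: "mat_inverse E = Some B" by blast
  then have "inv_mat E = B" unfolding inv_mat_def by simp
  then show ?thesis using mat_inverse(2)[OF E B] by simp
qed

lemma mean_gap:
  fixes M :: "'a measure" and Y :: "nat \<Rightarrow> 'a \<Rightarrow> real" and F :: "real \<Rightarrow> real"
  assumes ps: "prob_space M"
    and n2: "n \<ge> 2"
    and rv: "\<And>i. i < n \<Longrightarrow> Y i \<in> borel_measurable M"
    and indep: "prob_space.indep_vars M (\<lambda>_. borel) Y {..<n}"
    and cdf: "\<And>i x. i < n \<Longrightarrow> measure M {w \<in> space M. Y i w \<le> x} = F x"
    and nondeg: "\<exists>x. 0 < F x \<and> F x < 1"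
    and int0: "integrable M (Y 0)"
    and int1: "integrable M (Y 1)"
  shows "integral\<^sup>L M (pmax Y 0) < integral\<^sup>L M (pmax Y 1)"
proof (rule ccontr)
  interpret prob_space M by (rule ps)
  assume "\<not> ?thesis"
  then have le: "integral\<^sup>L M (pmax Y 1) - integral\<^sup>L M (pmax Y 0) \<le> 0" by simp
  have p0: "pmax Y 0 = Y 0" by (rule ext) (simp add: pmax_def)
  have p1: "pmax Y 1 = (\<lambda>w. max (Y 0 w) (Y 1 w))"
  proof (rule ext)
    fix w
    have "{..1::nat} = {0, 1}" by auto
    then show "pmax Y 1 w = max (Y 0 w) (Y 1 w)" unfolding pmax_def by (simp add: max.commute)
  qed
  define g where "g w = max (Y 0 w) (Y 1 w) - Y 0 w" for w
  have gint: "integrable M g" unfolding g_def using int0 int1 by auto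
  have gnn: "AE w in M. 0 \<le> g w" unfolding g_def by simp
  have "integral\<^sup>L M g = integral\<^sup>L M (pmax Y 1) - integral\<^sup>L M (pmax Y 0)"
    unfolding g_def p0 p1 using int0 int1 by (simp add: Bochner_Integration.integral_diff)
  then have "integral\<^sup>L M g \<le> 0" using le by simp
  moreover have "integral\<^sup>L M g \<ge> 0" using integral_nonneg_AE[OF gnn] .
  ultimately have "integral\<^sup>L M g = 0" by simp
  then have AEg: "AE w in M. g w = 0" using integral_nonneg_eq_0_iff_AE[OF gint gnn] by simp
  obtain x where x: "0 < F x" "F x < 1" using nondeg by blast
  have r0: "Y 0 \<in> borel_measurable M" and r1: "Y 1 \<in> borel_measurable M" using rv n2 by auto
  define S where "S = {w \<in> space M. Y 0 w \<le> x \<and> x < Y 1 w}"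
  have Ssets: "S \<in> sets M" unfolding S_def using r0 r1 by measurable
  have "AE w in M. w \<notin> S"
    using AEg by eventually_elim (auto simp: S_def g_def)
  then have "S \<in> null_sets M" using AE_iff_null_sets[OF Ssets] by simp
  then have pS0: "prob S = 0" by (simp add: measure_eq_0_null_sets)
  define A where "A i = (if i = 0 then {..x} else {x<..})" for i :: nat
  have "prob (\<Inter>i\<in>{0,1}. Y i -` A i \<inter> space M) = (\<Prod>i\<in>{0,1}. prob (Y i -` A i \<inter> space M))"
    by (rule indep_varsD[OF indep]) (use n2 in \<open>auto simp: A_def\<close>)
  moreover have "(\<Inter>i\<in>{0,1}. Y i -` A i \<inter> space M) = S" unfolding S_def A_def by auto
  moreover have "(\<Prod>i\<in>{0,1}. prob (Y i -` A i \<inter> space M)) =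
      prob {w \<in> space M. Y 0 w \<le> x} * prob (space M - {w \<in> space M. Y 1 w \<le> x})"
    unfolding A_def by (simp add: vimage_def Int_def) (intro arg_cong2[where f="(*)"] arg_cong[where f=prob]; auto)
  moreover have "prob {w \<in> space M. Y 0 w \<le> x} = F x" using cdf n2 by simp
  moreover have "prob (space M - {w \<in> space M. Y 1 w \<le> x}) = 1 - F x"
  proof -
    have ev: "{w \<in> space M. Y 1 w \<le> x} \<in> events" using r1 by measurable
    have "prob (space M - {w \<in> space M. Y 1 w \<le> x}) = 1 - prob {w \<in> space M. Y 1 w \<le> x}"
      by (rule prob_compl[OF ev])
    then show ?thesis using cdf n2 by simp
  qed
  ultimately have eqS: "prob S = F x * (1 - F x)" by simp
  have pos: "F x * (1 - F x) > 0" using x by simp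
  show False using eqS pos pS0 by linarith
qed

theorem proposition2p2:
  fixes M :: "'a measure" and Y :: "nat \<Rightarrow> 'a \<Rightarrow> real" and F :: "real \<Rightarrow> real"
    and n :: nat and theta1 theta2 :: real
  assumes "prob_space M"
    and "n \<ge> 2"
    and rv: "\<And>i. i < n \<Longrightarrow> Y i \<in> borel_measurable M"
    and indep: "prob_space.indep_vars M (\<lambda>_. borel) Y {..<n}"
    and cdf: "\<And>i x. i < n \<Longrightarrow> measure M {w \<in> space M. Y i w \<le> x} = F x"
    and nondeg: "\<exists>x. 0 < F x \<and> F x < 1"
    and finvar: "\<And>i. i < n \<Longrightarrow> integrable M (\<lambda>w. (Y i w)\<^sup>2)"
    and posdef: "pos_def_mat n (E_mat M n Y)"
    and "theta2 > 0"
  defines "Xs \<equiv> (\<lambda>w. vec n (\<lambda>j. theta1 + theta2 * pmax Y j w))"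
    and "mu \<equiv> mu_vec M n Y"
    and "Ei \<equiv> inv_mat (E_mat M n Y)"
    and "ones \<equiv> ones_vec n"
  defines "G \<equiv> Ei * mat n n (\<lambda>(i,j). ones $ i * mu $ j - mu $ i * ones $ j) * Ei"
    and "Q \<equiv> ones \<bullet> (Ei *\<^sub>v ones)"
  defines "D \<equiv> Q * (mu \<bullet> (Ei *\<^sub>v mu)) - (ones \<bullet> (Ei *\<^sub>v mu))\<^sup>2"
    and "c1 \<equiv> (1 / Q) \<cdot>\<^sub>v (transpose_mat Ei *\<^sub>v ones)"
    and "c2 \<equiv> (1 / Q) \<cdot>\<^sub>v (transpose_mat G *\<^sub>v ones)"
  shows "is_BLIE M n Xs (invariant_loc n) theta1 c1
       \<and> is_BLIE M n Xs (invariant_scale n) theta2 c2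
       \<and> MSE M Xs c1 theta1 = theta2\<^sup>2 / Q
       \<and> MSE M Xs c2 theta2 = (1 - D / Q) * theta2\<^sup>2
       \<and> D > 0"
proof -
  interpret prob_space M by fact
  interpret pm: pm_setup M Y n by unfold_locales (use assms in auto)
  have n2: "n \<ge> 2" by fact
  have Ecar: "E_mat M n Y \<in> carrier_mat n n" unfolding E_mat_def by simp
  have Esym: "transpose_mat (E_mat M n Y) = E_mat M n Y"
    unfolding E_mat_def by (rule eq_matI) (auto simp: mult.commute)
  have inv: "Ei \<in> carrier_mat n n \<and> E_mat M n Y * Ei = 1\<^sub>m n \<and> Ei * E_mat M n Y = 1\<^sub>m n"
    unfolding Ei_def by (rule posdef_inv[OF Ecar posdef])
  have mucar: "mu \<in> carrier_vec n" unfolding mu_def mu_vec_def by simp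
  have gap: "integral\<^sup>L M (pmax Y 0) < integral\<^sup>L M (pmax Y 1)"
    by (rule mean_gap[where F=F, OF \<open>prob_space M\<close> n2 rv indep cdf nondeg]) (use n2 pm.intY in auto)
  have np: "mu \<noteq> k \<cdot>\<^sub>v ones_vec n" for k
  proof
    assume h: "mu = k \<cdot>\<^sub>v ones_vec n"
    have "mu $ 0 = k" "mu $ 1 = k" using h n2 by auto
    moreover have "mu $ 0 = integral\<^sup>L M (pmax Y 0)" "mu $ 1 = integral\<^sup>L M (pmax Y 1)"
      using n2 unfolding mu_def mu_vec_def by auto
    ultimately show False using gap by simp
  qed
  have f: "MSE M Xs d t = (theta1 * (d \<bullet> ones_vec n) - t)\<^sup>2
        + 2 * (theta1 * (d \<bullet> ones_vec n) - t) * theta2 * (d \<bullet> mu) + theta2\<^sup>2 * (d \<bullet> (E_mat M n Y *\<^sub>v d))"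
    if d: "d \<in> carrier_vec n" for d t
  proof -
    have Xsw: "Xs w = theta1 \<cdot>\<^sub>v ones_vec n + theta2 \<cdot>\<^sub>v pmax_vec n Y w" for w
      unfolding Xs_def pmax_vec_def ones_vec_def by (rule eq_vecI) auto
    have dX: "d \<bullet> Xs w = theta1 * (d \<bullet> ones_vec n) + theta2 * (d \<bullet> pmax_vec n Y w)" for w
    proof -
      have "d \<bullet> Xs w = d \<bullet> (theta1 \<cdot>\<^sub>v ones_vec n) + d \<bullet> (theta2 \<cdot>\<^sub>v pmax_vec n Y w)"
        unfolding Xsw by (rule scalar_prod_add_distrib[OF d]) (auto simp: pmax_vec_def)
      then show ?thesis using d by (simp add: pmax_vec_def)
    qed
    have "MSE M Xs d t = integral\<^sup>L M (\<lambda>w. ((theta1 * (d \<bullet> ones_vec n) - t) + theta2 * (d \<bullet> pmax_vec n Y w))\<^sup>2)"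
      unfolding MSE_def dX by (simp add: algebra_simps)
    also have "\<dots> = (theta1 * (d \<bullet> ones_vec n) - t)\<^sup>2
        + 2 * (theta1 * (d \<bullet> ones_vec n) - t) * theta2 * (d \<bullet> mu) + theta2\<^sup>2 * (d \<bullet> (E_mat M n Y *\<^sub>v d))"
      unfolding mu_def by (rule pm.mse_expand[OF d])
    finally show ?thesis .
  qed
  have L: "(c1 \<in> carrier_vec n \<and> invariant_loc n c1 \<and>
          (\<forall>d\<in>carrier_vec n. invariant_loc n d \<longrightarrow> MSE M Xs c1 theta1 \<le> MSE M Xs d theta1) \<and>
          (\<forall>d\<in>carrier_vec n. invariant_loc n d \<longrightarrow> MSE M Xs d theta1 \<le> MSE M Xs c1 theta1 \<longrightarrow> d = c1))
       \<and> (c2 \<in> carrier_vec n \<and> invariant_scale n c2 \<and>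
          (\<forall>d\<in>carrier_vec n. invariant_scale n d \<longrightarrow> MSE M Xs c2 theta2 \<le> MSE M Xs d theta2) \<and>
          (\<forall>d\<in>carrier_vec n. invariant_scale n d \<longrightarrow> MSE M Xs d theta2 \<le> MSE M Xs c2 theta2 \<longrightarrow> d = c2))
       \<and> MSE M Xs c1 theta1 = theta2\<^sup>2 / Q
       \<and> MSE M Xs c2 theta2 = (1 - D / Q) * theta2\<^sup>2
       \<and> D > 0"
    unfolding c1_def c2_def D_def Q_def G_def ones_def
    by (rule la_main[OF Ecar Esym posdef conjunct1[OF inv] conjunct1[OF conjunct2[OF inv]]
          conjunct2[OF conjunct2[OF inv]] mucar np \<open>theta2 > 0\<close> f])
  then show ?thesis unfolding is_BLIE_def by blast
qed

end
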